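(* Let $H^{(0)}=0$, $R=R^\top\succ0$, $Q=Q^\top\succeq0$, and let $H^{(i)}$ be generated by $H^{(i+1)}=G+\gamma M(L(H^{(i)}))^\top H^{(i)}M(L(H^{(i)}))$. Then for every $i>0$ and every $x\in\mathbb{R}^n$, $r_0,\dots,r_N\in\mathbb{R}^n$, the control $u=L(H^{(i)})[x^\top,r_1^\top,\dots,r_N^\top]^\top$ is the unique minimizer over $u\in\mathbb{R}^m$ of $\tfrac12 z^\top H^{(i)} z$, where $z=[x^\top,u^\top,r_0^\top,\dots,r_N^\top]^\top$.
   Context: Dimensions: $x,r_j\in\mathbb{R}^n$, $u\in\mathbb{R}^m$, $A\in\mathbb{R}^{n\times n}$, $B\in\mathbb{R}^{n\times m}$, $\gamma\in[0,1)$, $N\in\mathbb{N}$. Symmetric matrices $H$ of size $((N+2)n+m)$ are partitioned into blocks $h_{ab}$, $a,b\in\{x,u,r_0,\dots,r_N\}$. For $H$ with invertible $h_{uu}$, $L(H)=-h_{uu}^{-1}[h_{ux},h_{ur_1},\dots,h_{ur_N}]=[L_x,L_1,\dots,L_N]$, and $L(0):=0$. $G=\begin{bmatrix}Q&0&-Q&0\\0&R&0&0\\-Q&0&Q&0\\0&0&0&0\end{bmatrix}$ (blocks $x$, $u$, $r_0$, $(r_1,\dots,r_N)$). $M(L)$ is the square matrix mapping $[x;u;r_0;\dots;r_N]$ to $[Ax+Bu;\;L_x(Ax+Bu)+L_1r_2+\dots+L_{N-1}r_N;\;r_1;\dots;r_N;\;0]$. *)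

theory Defs
  imports "Jordan_Normal_Form.Matrix"
begin

(* Layout of z = [x; u; r_0; ...; r_N] in R^((N+2)n+m):
   x at offset 0 (length n), u at offset n (length m),
   r_j at offset n+m+j*n (length n). *)

definition dimz :: "nat \<Rightarrow> nat \<Rightarrow> nat \<Rightarrow> nat" where
  "dimz n m N = (N+2)*n + m"

definition subv :: "real vec \<Rightarrow> nat \<Rightarrow> nat \<Rightarrow> real vec" where
  "subv z a k = vec k (\<lambda>i. z $ (a+i))"

definition concat_vecs :: "real vec list \<Rightarrow> real vec" where
  "concat_vecs vs = foldr (@\<^sub>v) vs (vec 0 (\<lambda>_. 0))"

definition symmetric_mat :: "real mat \<Rightarrow> bool" where
  "symmetric_mat A \<longleftrightarrow> transpose_mat A = A"

definition pos_def :: "nat \<Rightarrow> real mat \<Rightarrow> bool" where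
  "pos_def k A \<longleftrightarrow> A \<in> carrier_mat k k \<and> symmetric_mat A \<and>
     (\<forall>v\<in>carrier_vec k. v \<noteq> 0\<^sub>v k \<longrightarrow> v \<bullet> (A *\<^sub>v v) > 0)"

definition pos_semidef :: "nat \<Rightarrow> real mat \<Rightarrow> bool" where
  "pos_semidef k A \<longleftrightarrow> A \<in> carrier_mat k k \<and> symmetric_mat A \<and>
     (\<forall>v\<in>carrier_vec k. v \<bullet> (A *\<^sub>v v) \<ge> 0)"

definition huu :: "nat \<Rightarrow> nat \<Rightarrow> real mat \<Rightarrow> real mat" where
  "huu n m H = mat m m (\<lambda>(i,j). H $$ (n+i, n+j))"

(* [h_ux, h_ur_1, ..., h_ur_N] : m x (n + N n) *)
definition hrest :: "nat \<Rightarrow> nat \<Rightarrow> nat \<Rightarrow> real mat \<Rightarrow> real mat" where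
  "hrest n m N H = mat m (n + N*n)
     (\<lambda>(i,j). if j < n then H $$ (n+i, j) else H $$ (n+i, n+m+n+(j-n)))"

definition mat_inv :: "nat \<Rightarrow> real mat \<Rightarrow> real mat" where
  "mat_inv k A = (THE B. B \<in> carrier_mat k k \<and> A * B = 1\<^sub>m k \<and> B * A = 1\<^sub>m k)"

(* L(H) = - h_uu^{-1} [h_ux, h_ur_1, ..., h_ur_N]; L(H) := 0 when h_uu is singular
   (in particular L(0) = 0). *)
definition Lgain :: "nat \<Rightarrow> nat \<Rightarrow> nat \<Rightarrow> real mat \<Rightarrow> real mat" where
  "Lgain n m N H = (if invertible_mat (huu n m H)
      then - (mat_inv m (huu n m H) * hrest n m N H)
      else 0\<^sub>m m (n + N*n))"

(* block k of L = [L_x, L_1, ..., L_N]; k = 0 gives L_x *)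
definition Lblk :: "nat \<Rightarrow> nat \<Rightarrow> real mat \<Rightarrow> nat \<Rightarrow> real mat" where
  "Lblk n m L k = mat m n (\<lambda>(i,j). L $$ (i, n*k + j))"

definition Mmap :: "nat \<Rightarrow> nat \<Rightarrow> nat \<Rightarrow> real mat \<Rightarrow> real mat \<Rightarrow> real mat \<Rightarrow> real vec \<Rightarrow> real vec" where
  "Mmap n m N A B L z =
     (let x = subv z 0 n; u = subv z n m; r = (\<lambda>j. subv z (n+m+j*n) n);
          y = A *\<^sub>v x + B *\<^sub>v u;
          w = vec m (\<lambda>i. (Lblk n m L 0 *\<^sub>v y) $ i
                     + (\<Sum>k\<in>{1..<N}. (Lblk n m L k *\<^sub>v r (Suc k)) $ i))
      in y @\<^sub>v w @\<^sub>v concat_vecs (map r [1..<N+1]) @\<^sub>v 0\<^sub>v n)"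

definition Mmat :: "nat \<Rightarrow> nat \<Rightarrow> nat \<Rightarrow> real mat \<Rightarrow> real mat \<Rightarrow> real mat \<Rightarrow> real mat" where
  "Mmat n m N A B L = mat (dimz n m N) (dimz n m N)
     (\<lambda>(i,j). Mmap n m N A B L (unit_vec (dimz n m N) j) $ i)"

definition Gmat :: "nat \<Rightarrow> nat \<Rightarrow> nat \<Rightarrow> real mat \<Rightarrow> real mat \<Rightarrow> real mat" where
  "Gmat n m N Q R = mat (dimz n m N) (dimz n m N) (\<lambda>(i,j).
     if i < n \<and> j < n then Q $$ (i, j)
     else if n \<le> i \<and> i < n+m \<and> n \<le> j \<and> j < n+m then R $$ (i-n, j-n)
     else if i < n \<and> n+m \<le> j \<and> j < n+m+n then - Q $$ (i, j-(n+m))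
     else if n+m \<le> i \<and> i < n+m+n \<and> j < n then - Q $$ (i-(n+m), j)
     else if n+m \<le> i \<and> i < n+m+n \<and> n+m \<le> j \<and> j < n+m+n then Q $$ (i-(n+m), j-(n+m))
     else 0)"

fun Hseq :: "nat \<Rightarrow> nat \<Rightarrow> nat \<Rightarrow> real mat \<Rightarrow> real mat \<Rightarrow> real mat \<Rightarrow> real mat \<Rightarrow> real \<Rightarrow> nat \<Rightarrow> real mat" where
  "Hseq n m N A B Q R \<gamma> 0 = 0\<^sub>m (dimz n m N) (dimz n m N)"
| "Hseq n m N A B Q R \<gamma> (Suc i) =
     (let H = Hseq n m N A B Q R \<gamma> i; M = Mmat n m N A B (Lgain n m N H)
      in Gmat n m N Q R + \<gamma> \<cdot>\<^sub>m (transpose_mat M * H * M))"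

end

theory Submission
  imports Defs "Jordan_Normal_Form.Determinant"
begin

lemma sum_split_lt: "(\<Sum>i\<in>{0..<a+(b::nat)}. f i) = (\<Sum>i\<in>{0..<a}. f i) + (\<Sum>i\<in>{0..<b}. f (a+i))"
proof (induction b)
  case 0 then show ?case by simp
next
  case (Suc b) then show ?case by (simp add: add.assoc)
qed

lemma concat_vecs_carrier:
  "(\<forall>v\<in>set vs. v \<in> carrier_vec n) \<Longrightarrow> concat_vecs vs \<in> carrier_vec (length vs * n)"
  by (induction vs) (auto simp: concat_vecs_def)

lemma dimz_eq: "dimz n m N = n + m + n + N*n"
  by (simp add: dimz_def algebra_simps)

lemma dd_prod:
  assumes e: "e \<in> carrier_vec m" and w: "w \<in> carrier_vec (n+m+k)"
  shows "(0\<^sub>v n @\<^sub>v e @\<^sub>v 0\<^sub>v k) \<bullet> w = (\<Sum>c\<in>{0..<m}. e $ c * w $ (n+c))"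
proof -
  have "(0\<^sub>v n @\<^sub>v e @\<^sub>v 0\<^sub>v k) \<bullet> w = (\<Sum>i\<in>{0..<n+m+k}. (0\<^sub>v n @\<^sub>v e @\<^sub>v 0\<^sub>v k) $ i * w $ i)"
    using w by (simp add: scalar_prod_def)
  also have "\<dots> = (\<Sum>c\<in>{0..<m}. e $ c * w $ (n+c))"
    unfolding sum_split_lt using e by simp
  finally show ?thesis .
qed

lemma row_z:
  assumes H: "H \<in> carrier_mat (n+m+n+N*n) (n+m+n+N*n)"
    and x: "x \<in> carrier_vec n" and v: "v \<in> carrier_vec m" and r0: "r0 \<in> carrier_vec n"
    and rs: "rs \<in> carrier_vec (N*n)" and c: "c < m"
  shows "(H *\<^sub>v (x @\<^sub>v v @\<^sub>v r0 @\<^sub>v rs)) $ (n+c) = (huu n m H *\<^sub>v v) $ c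
     + (hrest n m N H *\<^sub>v (x @\<^sub>v rs)) $ c + (\<Sum>j\<in>{0..<n}. H $$ (n+c, n+m+j) * r0 $ j)"
proof -
  have "(H *\<^sub>v (x @\<^sub>v v @\<^sub>v r0 @\<^sub>v rs)) $ (n+c) = (\<Sum>j\<in>{0..<n+m+n+N*n}. H $$ (n+c,j) * (x @\<^sub>v v @\<^sub>v r0 @\<^sub>v rs) $ j)"
    using H x v r0 rs c by (simp add: mult_mat_vec_def scalar_prod_def add.assoc)
  also have "\<dots> = (\<Sum>j\<in>{0..<n}. H $$ (n+c,j) * x $ j) + (\<Sum>j\<in>{0..<m}. H $$ (n+c,n+j) * v $ j)
      + (\<Sum>j\<in>{0..<n}. H $$ (n+c, n+m+j) * r0 $ j) + (\<Sum>j\<in>{0..<N*n}. H $$ (n+c,n+m+n+j) * rs $ j)"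
    unfolding sum_split_lt using x v r0 rs by (simp add: add.assoc)
  also have "(huu n m H *\<^sub>v v) $ c = (\<Sum>j\<in>{0..<m}. H $$ (n+c,n+j) * v $ j)"
    using v c by (simp add: huu_def mult_mat_vec_def scalar_prod_def)
  moreover have "(hrest n m N H *\<^sub>v (x @\<^sub>v rs)) $ c = (\<Sum>j\<in>{0..<n}. H $$ (n+c,j) * x $ j) + (\<Sum>j\<in>{0..<N*n}. H $$ (n+c,n+m+n+j) * rs $ j)"
    using x rs c by (simp add: hrest_def mult_mat_vec_def scalar_prod_def sum_split_lt)
  ultimately show ?thesis by simp
qed

lemma quad_min:
  fixes H :: "real mat" and n m N :: nat
  defines "D \<equiv> n+m+n+N*n"
  assumes H: "H \<in> carrier_mat D D" and sym: "transpose_mat H = H"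
    and hpd: "\<forall>e\<in>carrier_vec m. e \<noteq> 0\<^sub>v m \<longrightarrow> e \<bullet> (huu n m H *\<^sub>v e) > 0"
    and h0: "\<forall>k<m. \<forall>j<n. H $$ (n+k, n+m+j) = 0"
    and x: "x \<in> carrier_vec n" and r0: "r0 \<in> carrier_vec n" and rs: "rs \<in> carrier_vec (N*n)"
    and u: "u \<in> carrier_vec m" and hu: "huu n m H *\<^sub>v u = - (hrest n m N H *\<^sub>v (x @\<^sub>v rs))"
    and v: "v \<in> carrier_vec m" and vu: "v \<noteq> u"
  shows "(x @\<^sub>v u @\<^sub>v r0 @\<^sub>v rs) \<bullet> (H *\<^sub>v (x @\<^sub>v u @\<^sub>v r0 @\<^sub>v rs))
       < (x @\<^sub>v v @\<^sub>v r0 @\<^sub>v rs) \<bullet> (H *\<^sub>v (x @\<^sub>v v @\<^sub>v r0 @\<^sub>v rs))"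
proof -
  define d where "d = v - u"
  define dd where "dd = 0\<^sub>v n @\<^sub>v d @\<^sub>v 0\<^sub>v (n+N*n)"
  define zu where "zu = x @\<^sub>v u @\<^sub>v r0 @\<^sub>v rs"
  define zv where "zv = x @\<^sub>v v @\<^sub>v r0 @\<^sub>v rs"
  have d: "d \<in> carrier_vec m" using u v d_def by simp
  have dnz: "d \<noteq> 0\<^sub>v m" using vu u v d_def
    by (metis eq_vecI carrier_vecD index_minus_vec(1,2) index_zero_vec(1,2) right_minus_eq)
  have dd: "dd \<in> carrier_vec D" using d unfolding dd_def D_def by (simp add: add.assoc)
  have zu: "zu \<in> carrier_vec D" using x u r0 rs unfolding zu_def D_def by (simp add: add.assoc)
  have zv: "zv \<in> carrier_vec D" using x v r0 rs unfolding zv_def D_def by (simp add: add.assoc)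
  have zvu: "zv = zu + dd"
    by (rule eq_vecI, insert x u v r0 rs d, auto simp: zu_def zv_def dd_def d_def)
  have dd2: "dd = 0\<^sub>v n @\<^sub>v d @\<^sub>v 0\<^sub>v n @\<^sub>v 0\<^sub>v (N*n)"
    unfolding dd_def by (rule arg_cong[where f="\<lambda>t. 0\<^sub>v n @\<^sub>v d @\<^sub>v t"], rule eq_vecI, auto)
  have Hzu: "(H *\<^sub>v zu) $ (n+c) = 0" if c: "c < m" for c
  proof -
    have "(H *\<^sub>v zu) $ (n+c) = (huu n m H *\<^sub>v u) $ c + (hrest n m N H *\<^sub>v (x @\<^sub>v rs)) $ c
       + (\<Sum>j\<in>{0..<n}. H $$ (n+c, n+m+j) * r0 $ j)"
      unfolding zu_def by (rule row_z[OF H[unfolded D_def] x u r0 rs c])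
    also have "\<dots> = 0" using hu h0 c by (simp add: huu_def hrest_def)
    finally show ?thesis .
  qed
  have Hdd: "(H *\<^sub>v dd) $ (n+c) = (huu n m H *\<^sub>v d) $ c" if c: "c < m" for c
  proof -
    have "(H *\<^sub>v dd) $ (n+c) = (huu n m H *\<^sub>v d) $ c + (hrest n m N H *\<^sub>v (0\<^sub>v n @\<^sub>v 0\<^sub>v (N*n))) $ c
       + (\<Sum>j\<in>{0..<n}. H $$ (n+c, n+m+j) * 0\<^sub>v n $ j)"
      unfolding dd2 by (rule row_z[OF H[unfolded D_def] _ d _ _ c], auto)
    also have "(hrest n m N H *\<^sub>v (0\<^sub>v n @\<^sub>v 0\<^sub>v (N*n))) $ c = 0"
      using c by (simp add: hrest_def mult_mat_vec_def scalar_prod_def, intro sum.neutral, auto)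
    finally show ?thesis by simp
  qed
  have HzuD: "H *\<^sub>v zu \<in> carrier_vec (n+m+(n+N*n))" using mult_mat_vec_carrier[OF H zu] unfolding D_def by (simp add: add.assoc)
  have HddD: "H *\<^sub>v dd \<in> carrier_vec (n+m+(n+N*n))" using mult_mat_vec_carrier[OF H dd] unfolding D_def by (simp add: add.assoc)
  have ddp: "dd \<bullet> w = (\<Sum>c\<in>{0..<m}. d $ c * w $ (n+c))" if "w \<in> carrier_vec (n+m+(n+N*n))" for w
    unfolding dd_def by (rule dd_prod[OF d that])
  have p1: "dd \<bullet> (H *\<^sub>v zu) = 0"
    by (simp add: ddp[OF HzuD] Hzu)
  have p2: "dd \<bullet> (H *\<^sub>v dd) = d \<bullet> (huu n m H *\<^sub>v d)"
  proof -
    have "dd \<bullet> (H *\<^sub>v dd) = (\<Sum>c\<in>{0..<m}. d $ c * (huu n m H *\<^sub>v d) $ c)"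
      by (simp add: ddp[OF HddD] Hdd)
    also have "\<dots> = d \<bullet> (huu n m H *\<^sub>v d)" by (simp add: scalar_prod_def huu_def)
    finally show ?thesis .
  qed
  have p3: "zu \<bullet> (H *\<^sub>v dd) = dd \<bullet> (H *\<^sub>v zu)"
  proof -
    have "zu \<bullet> (H *\<^sub>v dd) = (transpose_mat H *\<^sub>v zu) \<bullet> dd"
      by (rule transpose_vec_mult_scalar[OF H dd zu, symmetric])
    also have "\<dots> = dd \<bullet> (H *\<^sub>v zu)" unfolding sym using H zu dd by (simp add: comm_scalar_prod[of _ D])
    finally show ?thesis .
  qed
  have "zv \<bullet> (H *\<^sub>v zv) = zu \<bullet> (H *\<^sub>v zu) + zu \<bullet> (H *\<^sub>v dd) + (dd \<bullet> (H *\<^sub>v zu) + dd \<bullet> (H *\<^sub>v dd))"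
    unfolding zvu using H zu dd
    by (simp add: mult_add_distrib_mat_vec[of H D D] add_scalar_prod_distrib[of _ D]
        scalar_prod_add_distrib[of _ D])
  moreover have "d \<bullet> (huu n m H *\<^sub>v d) > 0" using hpd d dnz by blast
  ultimately show ?thesis using p1 p2 p3 unfolding zu_def zv_def by simp
qed

lemma quad_add_smult:
  fixes A B :: "real mat"
  assumes A: "A \<in> carrier_mat D D" and B: "B \<in> carrier_mat D D" and v: "v \<in> carrier_vec D"
  shows "v \<bullet> ((A + c \<cdot>\<^sub>m B) *\<^sub>v v) = v \<bullet> (A *\<^sub>v v) + c * (v \<bullet> (B *\<^sub>v v))"
proof -
  have "(A + c \<cdot>\<^sub>m B) *\<^sub>v v = A *\<^sub>v v + c \<cdot>\<^sub>v (B *\<^sub>v v)"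
    by (rule eq_vecI, insert A B v, auto simp: scalar_prod_def algebra_simps sum.distrib sum_distrib_left)
  then show ?thesis using A B v
    by (simp add: scalar_prod_add_distrib[of _ D])
qed

lemma quad_MtHM:
  fixes M H :: "real mat"
  assumes M: "M \<in> carrier_mat D D" and H: "H \<in> carrier_mat D D" and v: "v \<in> carrier_vec D"
  shows "v \<bullet> ((transpose_mat M * H * M) *\<^sub>v v) = (M *\<^sub>v v) \<bullet> (H *\<^sub>v (M *\<^sub>v v))"
proof -
  have "(transpose_mat M * H * M) *\<^sub>v v = transpose_mat M *\<^sub>v (H *\<^sub>v (M *\<^sub>v v))"
    using M H v by (simp add: assoc_mult_mat_vec[of _ D D _ D])
  then have "v \<bullet> ((transpose_mat M * H * M) *\<^sub>v v) = (transpose_mat M *\<^sub>v (H *\<^sub>v (M *\<^sub>v v))) \<bullet> v"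
    using M H v by (simp add: comm_scalar_prod[of _ D])
  also have "\<dots> = (H *\<^sub>v (M *\<^sub>v v)) \<bullet> (M *\<^sub>v v)"
    by (rule transpose_vec_mult_scalar[OF M v], insert M H v, auto)
  also have "\<dots> = (M *\<^sub>v v) \<bullet> (H *\<^sub>v (M *\<^sub>v v))"
    using M H v by (simp add: comm_scalar_prod[of _ D])
  finally show ?thesis .
qed

lemma huu_quad:
  fixes K :: "real mat" and n m N :: nat
  assumes K: "K \<in> carrier_mat (n+m+n+N*n) (n+m+n+N*n)" and e: "e \<in> carrier_vec m"
  shows "(0\<^sub>v n @\<^sub>v e @\<^sub>v 0\<^sub>v (n+N*n)) \<bullet> (K *\<^sub>v (0\<^sub>v n @\<^sub>v e @\<^sub>v 0\<^sub>v (n+N*n))) = e \<bullet> (huu n m K *\<^sub>v e)"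
proof -
  let ?dd = "0\<^sub>v n @\<^sub>v e @\<^sub>v 0\<^sub>v (n+N*n)"
  have dd2: "?dd = 0\<^sub>v n @\<^sub>v e @\<^sub>v 0\<^sub>v n @\<^sub>v 0\<^sub>v (N*n)"
    by (rule arg_cong[where f="\<lambda>t. 0\<^sub>v n @\<^sub>v e @\<^sub>v t"], rule eq_vecI, auto)
  have dd: "?dd \<in> carrier_vec (n+m+n+N*n)" using e by (simp add: add.assoc)
  have KD: "K *\<^sub>v ?dd \<in> carrier_vec (n+m+(n+N*n))" using mult_mat_vec_carrier[OF K dd] by (simp add: add.assoc)
  have Kdd: "(K *\<^sub>v ?dd) $ (n+c) = (huu n m K *\<^sub>v e) $ c" if c: "c < m" for c
  proof -
    have "(K *\<^sub>v ?dd) $ (n+c) = (huu n m K *\<^sub>v e) $ c + (hrest n m N K *\<^sub>v (0\<^sub>v n @\<^sub>v 0\<^sub>v (N*n))) $ c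
       + (\<Sum>j\<in>{0..<n}. K $$ (n+c, n+m+j) * 0\<^sub>v n $ j)"
      unfolding dd2 by (rule row_z[OF K _ e _ _ c], auto)
    also have "(hrest n m N K *\<^sub>v (0\<^sub>v n @\<^sub>v 0\<^sub>v (N*n))) $ c = 0"
      using c by (simp add: hrest_def mult_mat_vec_def scalar_prod_def, intro sum.neutral, auto)
    finally show ?thesis by simp
  qed
  have "?dd \<bullet> (K *\<^sub>v ?dd) = (\<Sum>c\<in>{0..<m}. e $ c * (huu n m K *\<^sub>v e) $ c)"
    by (simp add: dd_prod[OF e KD] Kdd)
  also have "\<dots> = e \<bullet> (huu n m K *\<^sub>v e)" by (simp add: scalar_prod_def huu_def)
  finally show ?thesis .
qed

lemma Gmat_carrier: "Gmat n m N Q R \<in> carrier_mat (n+m+n+N*n) (n+m+n+N*n)"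
  by (simp add: Gmat_def dimz_eq)

lemma Mmat_carrier: "Mmat n m N A B L \<in> carrier_mat (n+m+n+N*n) (n+m+n+N*n)"
  by (simp add: Mmat_def dimz_eq)

lemma huu_G: "huu n m (Gmat n m N Q R) = R" if "R \<in> carrier_mat m m"
  by (rule eq_matI, insert that, auto simp: huu_def Gmat_def dimz_eq)

lemma G_h0: "k < m \<Longrightarrow> j < n \<Longrightarrow> Gmat n m N Q R $$ (n+k, n+m+j) = 0"
  by (simp add: Gmat_def dimz_eq)

lemma G_sym:
  assumes Q: "Q \<in> carrier_mat n n" "transpose_mat Q = Q" and R: "R \<in> carrier_mat m m" "transpose_mat R = R"
  shows "transpose_mat (Gmat n m N Q R) = Gmat n m N Q R"
proof -
  have q: "Q $$ (a,b) = Q $$ (b,a)" if "a < n" "b < n" for a b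
    using that Q by (metis carrier_matD(1,2) index_transpose_mat(1))
  have r: "R $$ (a,b) = R $$ (b,a)" if "a < m" "b < m" for a b
    using that R by (metis carrier_matD(1,2) index_transpose_mat(1))
  show ?thesis
  proof (rule eq_matI)
    fix i j assume i: "i < dim_row (Gmat n m N Q R)" and j: "j < dim_col (Gmat n m N Q R)"
    have i': "i < dimz n m N" and j': "j < dimz n m N" using i j by (auto simp: Gmat_def)
    have "Gmat n m N Q R $$ (j, i) = Gmat n m N Q R $$ (i, j)"
      unfolding Gmat_def index_mat(1)[OF j' i'] index_mat(1)[OF i' j'] split
      by (cases "i<n"; cases "i<n+m"; cases "i<n+m+n"; cases "j<n"; cases "j<n+m"; cases "j<n+m+n";
          simp add: q r)
    moreover have dims: "dim_row (Gmat n m N Q R) = dimz n m N" "dim_col (Gmat n m N Q R) = dimz n m N"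
      by (simp_all add: Gmat_def)
    ultimately show "transpose_mat (Gmat n m N Q R) $$ (i, j) = Gmat n m N Q R $$ (i, j)"
      using i' j' by (simp add: dims)
  qed (auto simp: Gmat_def)
qed

lemma row_split4:
  fixes K :: "real mat"
  assumes K: "K \<in> carrier_mat (n+m+n+N*n) (n+m+n+N*n)" and v: "v \<in> carrier_vec (n+m+n+N*n)"
    and a: "a < n+m+n+N*n"
  shows "(K *\<^sub>v v) $ a = (\<Sum>b\<in>{0..<n}. K $$ (a,b) * v $ b) + (\<Sum>b\<in>{0..<m}. K $$ (a,n+b) * v $ (n+b))
     + (\<Sum>b\<in>{0..<n}. K $$ (a,n+m+b) * v $ (n+m+b)) + (\<Sum>b\<in>{0..<N*n}. K $$ (a,n+m+n+b) * v $ (n+m+n+b))"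
  using K v a by (simp add: mult_mat_vec_def scalar_prod_def sum_split_lt add.assoc)

lemma Gent: "i < dimz n m N \<Longrightarrow> j < dimz n m N \<Longrightarrow> Gmat n m N Q R $$ (i,j) = 
     (if i < n \<and> j < n then Q $$ (i, j)
     else if n \<le> i \<and> i < n+m \<and> n \<le> j \<and> j < n+m then R $$ (i-n, j-n)
     else if i < n \<and> n+m \<le> j \<and> j < n+m+n then - Q $$ (i, j-(n+m))
     else if n+m \<le> i \<and> i < n+m+n \<and> j < n then - Q $$ (i-(n+m), j)
     else if n+m \<le> i \<and> i < n+m+n \<and> n+m \<le> j \<and> j < n+m+n then Q $$ (i-(n+m), j-(n+m))
     else 0)"
  by (simp add: Gmat_def)

lemma G_quad:
  fixes Q R :: "real mat"
  assumes v: "v \<in> carrier_vec (n+m+n+N*n)" and Q: "Q \<in> carrier_mat n n" and R: "R \<in> carrier_mat m m"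
  defines "p \<equiv> vec n (\<lambda>c. v $ c - v $ (n+m+c))" and "w \<equiv> vec m (\<lambda>c. v $ (n+c))"
  shows "v \<bullet> (Gmat n m N Q R *\<^sub>v v) = p \<bullet> (Q *\<^sub>v p) + w \<bullet> (R *\<^sub>v w)"
proof -
  let ?G = "Gmat n m N Q R"
  note G = Gmat_carrier[of n m N Q R]
  have b1: "(?G *\<^sub>v v) $ c = (\<Sum>b\<in>{0..<n}. Q $$ (c,b) * v $ b) - (\<Sum>b\<in>{0..<n}. Q $$ (c,b) * v $ (n+m+b))" if "c < n" for c
    using that by (simp add: row_split4[OF G v] Gent dimz_eq sum_negf)
  have Qp: "(Q *\<^sub>v p) $ c = (\<Sum>b\<in>{0..<n}. Q $$ (c,b) * v $ b) - (\<Sum>b\<in>{0..<n}. Q $$ (c,b) * v $ (n+m+b))" if "c < n" for c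
    using that Q by (simp add: p_def mult_mat_vec_def scalar_prod_def right_diff_distrib sum_subtractf)
  have b1': "(?G *\<^sub>v v) $ c = (Q *\<^sub>v p) $ c" if "c < n" for c using that b1 Qp by simp
  have b2: "(?G *\<^sub>v v) $ (n+c) = (R *\<^sub>v w) $ c" if "c < m" for c
  proof -
    have Rw: "(R *\<^sub>v w) $ c = (\<Sum>b\<in>{0..<m}. R $$ (c,b) * v $ (n+b))"
      using that R by (simp add: w_def mult_mat_vec_def scalar_prod_def)
    show ?thesis using that by (simp add: row_split4[OF G v] Gent dimz_eq Rw)
  qed
  have b3: "(?G *\<^sub>v v) $ (n+m+c) = - (Q *\<^sub>v p) $ c" if "c < n" for c
    using that by (simp add: row_split4[OF G v] Gent dimz_eq sum_negf Qp)
  have b4: "(?G *\<^sub>v v) $ (n+m+n+c) = 0" if "c < N*n" for c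
    using that by (simp add: row_split4[OF G v] Gent dimz_eq)
  have GvD: "?G *\<^sub>v v \<in> carrier_vec (n+m+n+N*n)" using G v by simp
  have "v \<bullet> (?G *\<^sub>v v) = (\<Sum>a\<in>{0..<n+m+n+N*n}. v $ a * (?G *\<^sub>v v) $ a)"
    unfolding scalar_prod_def carrier_vecD[OF GvD] by (rule refl)
  also have "\<dots> = (\<Sum>c\<in>{0..<n}. v $ c * (Q *\<^sub>v p) $ c) + (\<Sum>c\<in>{0..<m}. v $ (n+c) * (R *\<^sub>v w) $ c)
      + (\<Sum>c\<in>{0..<n}. v $ (n+m+c) * (- (Q *\<^sub>v p) $ c))"
    unfolding sum_split_lt by (simp add: b1' b2 b3 b4)
  also have "\<dots> = p \<bullet> (Q *\<^sub>v p) + w \<bullet> (R *\<^sub>v w)"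
    using Q R by (simp add: scalar_prod_def p_def w_def left_diff_distrib sum_subtractf sum_negf)
  finally show ?thesis .
qed

lemma zero_append_zero: "0\<^sub>v a @\<^sub>v 0\<^sub>v b = (0\<^sub>v (a+b) :: real vec)"
  by (rule eq_vecI, auto)

lemma concat_zero: "concat_vecs (map (\<lambda>_. 0\<^sub>v n) xs) = (0\<^sub>v (length xs * n) :: real vec)"
  by (induction xs) (auto simp: concat_vecs_def zero_append_zero)

lemma mat_vec_zero: "(K :: real mat) *\<^sub>v 0\<^sub>v k = 0\<^sub>v (dim_row K)"
  by (rule eq_vecI, auto simp: scalar_prod_def)

lemma Mmap_r0:
  fixes A B L :: "real mat"
  assumes A: "A \<in> carrier_mat n n" and B: "B \<in> carrier_mat n m" and j: "j < n"
  shows "Mmap n m N A B L (unit_vec (dimz n m N) (n+m+j)) = 0\<^sub>v (n+m+N*n+n)"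
proof -
  let ?z = "unit_vec (dimz n m N) (n+m+j) :: real vec"
  have s1: "subv ?z 0 n = 0\<^sub>v n" by (rule eq_vecI, auto simp: subv_def dimz_eq unit_vec_def)
  have s2: "subv ?z n m = 0\<^sub>v m" by (rule eq_vecI, auto simp: subv_def dimz_eq unit_vec_def)
  have s3: "subv ?z (n+m+l*n) n = 0\<^sub>v n" if "l \<ge> 1" "l \<le> N" for l
  proof -
    have "l*n \<ge> n" using that by simp
    moreover have "l*n \<le> N*n" using that by simp
    ultimately have "n+m+l*n+i < n+m+n+N*n \<and> n+m+l*n+i \<noteq> n+m+j" if "i < n" for i
      using that j by linarith
    then show ?thesis by (intro eq_vecI, auto simp: subv_def dimz_eq unit_vec_def)
  qed
  have c: "map (\<lambda>l. subv ?z (n+m+l*n) n) [1..<N+1] = map (\<lambda>_. 0\<^sub>v n) [1..<N+1]"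
    by (rule map_cong, auto simp: s3)
  have w: "vec m (\<lambda>i. (Lblk n m L 0 *\<^sub>v (0\<^sub>v n :: real vec)) $ i
                     + (\<Sum>k\<in>{1..<N}. (Lblk n m L k *\<^sub>v subv ?z (n+m+(Suc k)*n) n) $ i)) = 0\<^sub>v m"
  proof (rule eq_vecI)
    fix i assume i: "i < dim_vec (0\<^sub>v m :: real vec)"
    have "(\<Sum>k\<in>{1..<N}. (Lblk n m L k *\<^sub>v subv ?z (n+m+(Suc k)*n) n) $ i) = 0"
    proof (rule sum.neutral, rule ballI)
      fix k assume k: "k \<in> {1..<N}"
      have "subv ?z (n+m+(Suc k)*n) n = 0\<^sub>v n" by (rule s3, insert k, auto)
      then show "(Lblk n m L k *\<^sub>v subv ?z (n+m+(Suc k)*n) n) $ i = 0"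
        using i by (simp only: mat_vec_zero, simp add: Lblk_def)
    qed
    then show "vec m (\<lambda>i. (Lblk n m L 0 *\<^sub>v (0\<^sub>v n :: real vec)) $ i
                     + (\<Sum>k\<in>{1..<N}. (Lblk n m L k *\<^sub>v subv ?z (n+m+(Suc k)*n) n) $ i)) $ i = 0\<^sub>v m $ i"
      using i by (simp add: mat_vec_zero Lblk_def)
  qed simp
  have y: "A *\<^sub>v 0\<^sub>v n + B *\<^sub>v 0\<^sub>v m = (0\<^sub>v n :: real vec)"
    using A B by (simp add: mat_vec_zero)
  show ?thesis
    unfolding Mmap_def Let_def s1 s2 c y w concat_zero length_map length_upt by (simp only: zero_append_zero, simp add: add.assoc)
qed

lemma M_col0:
  fixes A B L :: "real mat"
  assumes A: "A \<in> carrier_mat n n" and B: "B \<in> carrier_mat n m" and j: "j < n"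
  shows "col (Mmat n m N A B L) (n+m+j) = 0\<^sub>v (n+m+n+N*n)"
proof (rule eq_vecI)
  fix a assume "a < dim_vec (0\<^sub>v (n+m+n+N*n) :: real vec)"
  then have a: "a < dimz n m N" by (simp add: dimz_eq)
  have jj: "n+m+j < dimz n m N" using j by (simp add: dimz_eq)
  show "col (Mmat n m N A B L) (n+m+j) $ a = 0\<^sub>v (n+m+n+N*n) $ a"
    using a jj by (simp add: Mmat_def Mmap_r0[OF A B j], simp add: dimz_eq)
qed (simp add: Mmat_def dimz_eq)

lemma transpose_smult_mat: "transpose_mat (c \<cdot>\<^sub>m K) = c \<cdot>\<^sub>m transpose_mat K"
  by (rule eq_matI, auto)

lemma uminus_mat_vec: "(K :: real mat) \<in> carrier_mat a b \<Longrightarrow> y \<in> carrier_vec b \<Longrightarrow> (- K) *\<^sub>v y = - (K *\<^sub>v y)"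
  by (rule eq_vecI, auto simp: scalar_prod_def sum_negf)

lemma zero_mat_vec: "v \<in> carrier_vec b \<Longrightarrow> (0\<^sub>m a b :: real mat) *\<^sub>v v = 0\<^sub>v a"
  by (rule eq_vecI, auto simp: scalar_prod_def)

lemma Hseq_props:
  fixes A B Q R :: "real mat" and \<gamma> :: real
  assumes A: "A \<in> carrier_mat n n" and B: "B \<in> carrier_mat n m"
    and R: "pos_def m R" and Q: "pos_semidef n Q" and g: "0 \<le> \<gamma>"
  shows "Hseq n m N A B Q R \<gamma> i \<in> carrier_mat (n+m+n+N*n) (n+m+n+N*n)
    \<and> transpose_mat (Hseq n m N A B Q R \<gamma> i) = Hseq n m N A B Q R \<gamma> i
    \<and> (\<forall>v\<in>carrier_vec (n+m+n+N*n). v \<bullet> (Hseq n m N A B Q R \<gamma> i *\<^sub>v v) \<ge> 0)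
    \<and> (i > 0 \<longrightarrow> (\<forall>k<m. \<forall>j<n. Hseq n m N A B Q R \<gamma> i $$ (n+k, n+m+j) = 0)
         \<and> (\<forall>e\<in>carrier_vec m. e \<bullet> (huu n m (Hseq n m N A B Q R \<gamma> i) *\<^sub>v e) \<ge> e \<bullet> (R *\<^sub>v e)))"
proof (induction i)
  case 0
  then show ?case by (auto simp: dimz_eq zero_mat_vec)
next
  case (Suc i)
  let ?D = "n+m+n+N*n"
  define H where "H = Hseq n m N A B Q R \<gamma> i"
  define M where "M = Mmat n m N A B (Lgain n m N H)"
  define G where "G = Gmat n m N Q R"
  define K where "K = transpose_mat M * H * M"
  have H': "Hseq n m N A B Q R \<gamma> (Suc i) = G + \<gamma> \<cdot>\<^sub>m K"
    by (simp add: H_def M_def G_def K_def Let_def)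
  have Hc: "H \<in> carrier_mat ?D ?D" and Hs: "transpose_mat H = H"
    and Hp: "\<forall>v\<in>carrier_vec ?D. v \<bullet> (H *\<^sub>v v) \<ge> 0" using Suc.IH unfolding H_def by auto
  have Mc: "M \<in> carrier_mat ?D ?D" unfolding M_def by (rule Mmat_carrier)
  have Gc: "G \<in> carrier_mat ?D ?D" unfolding G_def by (rule Gmat_carrier)
  have Kc: "K \<in> carrier_mat ?D ?D" unfolding K_def using Mc Hc by auto
  have Qc: "Q \<in> carrier_mat n n" and Qs: "transpose_mat Q = Q" and Qp: "\<forall>v\<in>carrier_vec n. v \<bullet> (Q *\<^sub>v v) \<ge> 0"
    using Q unfolding pos_semidef_def symmetric_mat_def by auto
  have Rc: "R \<in> carrier_mat m m" and Rs: "transpose_mat R = R" and Rp: "\<forall>v\<in>carrier_vec m. v \<noteq> 0\<^sub>v m \<longrightarrow> v \<bullet> (R *\<^sub>v v) > 0"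
    using R unfolding pos_def_def symmetric_mat_def by auto
  have Rp': "w \<bullet> (R *\<^sub>v w) \<ge> 0" if "w \<in> carrier_vec m" for w
    using Rp that Rc by (cases "w = 0\<^sub>v m") (auto intro: less_imp_le)
  have Gs: "transpose_mat G = G" unfolding G_def by (rule G_sym[OF Qc Qs Rc Rs])
  have Gp: "v \<bullet> (G *\<^sub>v v) \<ge> 0" if v: "v \<in> carrier_vec ?D" for v
  proof -
    have "v \<bullet> (G *\<^sub>v v) = vec n (\<lambda>c. v $ c - v $ (n+m+c)) \<bullet> (Q *\<^sub>v vec n (\<lambda>c. v $ c - v $ (n+m+c)))
       + vec m (\<lambda>c. v $ (n+c)) \<bullet> (R *\<^sub>v vec m (\<lambda>c. v $ (n+c)))"
      unfolding G_def by (rule G_quad[OF v Qc Rc])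
    moreover have "vec n (\<lambda>c. v $ c - v $ (n+m+c)) \<bullet> (Q *\<^sub>v vec n (\<lambda>c. v $ c - v $ (n+m+c))) \<ge> 0"
      using Qp by simp
    moreover have "vec m (\<lambda>c. v $ (n+c)) \<bullet> (R *\<^sub>v vec m (\<lambda>c. v $ (n+c))) \<ge> 0"
      using Rp' by simp
    ultimately show ?thesis by simp
  qed
  have Kp: "v \<bullet> (K *\<^sub>v v) \<ge> 0" if v: "v \<in> carrier_vec ?D" for v
  proof -
    have "v \<bullet> (K *\<^sub>v v) = (M *\<^sub>v v) \<bullet> (H *\<^sub>v (M *\<^sub>v v))"
      unfolding K_def by (rule quad_MtHM[OF Mc Hc v])
    also have "\<dots> \<ge> 0" using Hp Mc v by simp
    finally show ?thesis .
  qed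
  have Ks: "transpose_mat K = K"
  proof -
    have MH: "transpose_mat M * H \<in> carrier_mat ?D ?D" using Mc Hc by simp
    have "transpose_mat K = transpose_mat M * transpose_mat (transpose_mat M * H)"
      unfolding K_def by (rule transpose_mult[OF MH Mc])
    also have "transpose_mat (transpose_mat M * H) = transpose_mat H * transpose_mat (transpose_mat M)"
      by (rule transpose_mult[of _ ?D ?D], insert Mc Hc, auto)
    also have "transpose_mat M * (transpose_mat H * transpose_mat (transpose_mat M)) = K"
      unfolding K_def Hs transpose_transpose using Mc Hc
      by (simp add: assoc_mult_mat[of _ ?D ?D _ ?D _ ?D])
    finally show ?thesis .
  qed
  have sym: "transpose_mat (G + \<gamma> \<cdot>\<^sub>m K) = G + \<gamma> \<cdot>\<^sub>m K"
    using Gc Kc by (simp add: transpose_add[of _ ?D ?D] transpose_smult_mat Gs Ks)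
  have psd: "v \<bullet> ((G + \<gamma> \<cdot>\<^sub>m K) *\<^sub>v v) \<ge> 0" if v: "v \<in> carrier_vec ?D" for v
    using quad_add_smult[OF Gc Kc v, of \<gamma>] Gp[OF v] Kp[OF v] g by simp
  have h0: "(G + \<gamma> \<cdot>\<^sub>m K) $$ (n+k, n+m+j) = 0" if "k < m" "j < n" for k j
  proof -
    have col0: "col M (n+m+j) = 0\<^sub>v ?D" unfolding M_def by (rule M_col0[OF A B \<open>j < n\<close>])
    have "K $$ (n+k, n+m+j) = row (transpose_mat M * H) (n+k) \<bullet> col M (n+m+j)"
      unfolding K_def by (rule index_mult_mat(1), insert Mc Hc that, auto)
    also have "\<dots> = 0" unfolding col0 using Mc Hc that by simp
    finally show ?thesis using Gc Kc that by (simp add: G_def G_h0)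
  qed
  have hb: "e \<bullet> (huu n m (G + \<gamma> \<cdot>\<^sub>m K) *\<^sub>v e) \<ge> e \<bullet> (R *\<^sub>v e)" if e: "e \<in> carrier_vec m" for e
  proof -
    let ?dd = "0\<^sub>v n @\<^sub>v e @\<^sub>v 0\<^sub>v (n+N*n) :: real vec"
    have dd: "?dd \<in> carrier_vec ?D" using e by (simp add: add.assoc)
    have GK: "G + \<gamma> \<cdot>\<^sub>m K \<in> carrier_mat ?D ?D" using Gc Kc by simp
    have "e \<bullet> (huu n m (G + \<gamma> \<cdot>\<^sub>m K) *\<^sub>v e) = ?dd \<bullet> ((G + \<gamma> \<cdot>\<^sub>m K) *\<^sub>v ?dd)"
      by (rule huu_quad[OF GK e, symmetric])
    also have "\<dots> = ?dd \<bullet> (G *\<^sub>v ?dd) + \<gamma> * (?dd \<bullet> (K *\<^sub>v ?dd))"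
      by (rule quad_add_smult[OF Gc Kc dd])
    also have "\<dots> \<ge> ?dd \<bullet> (G *\<^sub>v ?dd)" using Kp[OF dd] g by simp
    also have "?dd \<bullet> (G *\<^sub>v ?dd) = e \<bullet> (huu n m G *\<^sub>v e)" by (rule huu_quad[OF Gc e])
    also have "huu n m G = R" unfolding G_def by (rule huu_G[OF Rc])
    finally show ?thesis .
  qed
  show ?case unfolding H' using Gc Kc sym psd h0 hb by auto
qed

lemma pd_invertible:
  fixes K :: "real mat"
  assumes K: "K \<in> carrier_mat m m" and pd: "\<forall>e\<in>carrier_vec m. e \<noteq> 0\<^sub>v m \<longrightarrow> e \<bullet> (K *\<^sub>v e) > 0"
  shows "invertible_mat K \<and> K * mat_inv m K = 1\<^sub>m m \<and> mat_inv m K \<in> carrier_mat m m"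
proof -
  have "det K \<noteq> 0"
  proof
    assume "det K = 0"
    then obtain v where v: "v \<in> carrier_vec m" "v \<noteq> 0\<^sub>v m" "K *\<^sub>v v = 0\<^sub>v m"
      using det_0_iff_vec_prod_zero[OF K] by blast
    then have "v \<bullet> (K *\<^sub>v v) > 0" using pd by blast
    with v show False by simp
  qed
  from det_non_zero_imp_unit[OF K this, of "()"]
  obtain Bi where Bi: "Bi \<in> carrier_mat m m" "K * Bi = 1\<^sub>m m" "Bi * K = 1\<^sub>m m"
    unfolding Units_def ring_mat_def by auto
  have inv: "invertible_mat K" unfolding invertible_mat_def inverts_mat_def using K Bi
    by (intro conjI exI[of _ Bi]) auto
  have "mat_inv m K = Bi"
    unfolding mat_inv_def
  proof (rule the_equality)
    show "Bi \<in> carrier_mat m m \<and> K * Bi = 1\<^sub>m m \<and> Bi * K = 1\<^sub>m m" using Bi by simp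
  next
    fix C assume C: "C \<in> carrier_mat m m \<and> K * C = 1\<^sub>m m \<and> C * K = 1\<^sub>m m"
    have "(Bi * K) * C = C" using C Bi by auto
    then have "C = (Bi * K) * C" by simp
    also have "\<dots> = Bi * (K * C)" by (rule assoc_mult_mat, insert Bi C K, auto)
    also have "\<dots> = Bi"
    proof -
      from C have C2: "K * C = 1\<^sub>m m" by simp
      show ?thesis unfolding C2 using Bi by simp
    qed
    finally show "C = Bi" .
  qed
  then show ?thesis using inv Bi by simp
qed

theorem lemma5:
  fixes n m N :: nat and A B Q R :: "real mat" and \<gamma> :: real
    and i :: nat and x :: "real vec" and r :: "nat \<Rightarrow> real vec"
  assumes "A \<in> carrier_mat n n" and "B \<in> carrier_mat n m"
    and "pos_def m R" and "pos_semidef n Q"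
    and "0 \<le> \<gamma>" and "\<gamma> < 1"
    and "i > 0"
    and "x \<in> carrier_vec n" and "\<forall>j\<le>N. r j \<in> carrier_vec n"
  shows "let H = Hseq n m N A B Q R \<gamma> i;
             u = Lgain n m N H *\<^sub>v (x @\<^sub>v concat_vecs (map r [1..<N+1]));
             f = (\<lambda>v. 1/2 * ((x @\<^sub>v v @\<^sub>v concat_vecs (map r [0..<N+1]))
                    \<bullet> (H *\<^sub>v (x @\<^sub>v v @\<^sub>v concat_vecs (map r [0..<N+1])))))
         in u \<in> carrier_vec m \<and> (\<forall>v\<in>carrier_vec m. v \<noteq> u \<longrightarrow> f u < f v)"
proof -
  note A = assms(1) and Bm = assms(2) and R = assms(3) and Q = assms(4) and g = assms(5)
    and ipos = assms(7) and x = assms(8) and r = assms(9)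
  define H where "H = Hseq n m N A B Q R \<gamma> i"
  define rs where "rs = concat_vecs (map r [1..<N+1])"
  define y where "y = x @\<^sub>v rs"
  define K where "K = huu n m H"
  define Ki where "Ki = mat_inv m K"
  define P where "P = hrest n m N H"
  have props: "H \<in> carrier_mat (n+m+n+N*n) (n+m+n+N*n) \<and> transpose_mat H = H
    \<and> (\<forall>k<m. \<forall>j<n. H $$ (n+k, n+m+j) = 0)
    \<and> (\<forall>e\<in>carrier_vec m. e \<bullet> (K *\<^sub>v e) \<ge> e \<bullet> (R *\<^sub>v e))"
    using Hseq_props[OF A Bm R Q g, of N i] ipos unfolding H_def K_def by auto
  have Rp: "\<forall>v\<in>carrier_vec m. v \<noteq> 0\<^sub>v m \<longrightarrow> v \<bullet> (R *\<^sub>v v) > 0"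
    using R unfolding pos_def_def by auto
  have Kc: "K \<in> carrier_mat m m" unfolding K_def huu_def by simp
  have Kpd: "\<forall>e\<in>carrier_vec m. e \<noteq> 0\<^sub>v m \<longrightarrow> e \<bullet> (K *\<^sub>v e) > 0"
    using props Rp by (meson less_le_trans)
  have inv: "invertible_mat K" and KKi: "K * Ki = 1\<^sub>m m" and Kic: "Ki \<in> carrier_mat m m"
    using pd_invertible[OF Kc Kpd] unfolding Ki_def by auto
  have rsc: "rs \<in> carrier_vec (N*n)"
  proof -
    have "\<forall>v\<in>set (map r [1..<N+1]). v \<in> carrier_vec n" using r by auto
    from concat_vecs_carrier[OF this] show ?thesis unfolding rs_def length_map length_upt by simp
  qed
  have yc: "y \<in> carrier_vec (n + N*n)" unfolding y_def using x rsc by simp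
  have Pc: "P \<in> carrier_mat m (n + N*n)" unfolding P_def hrest_def by simp
  have L: "Lgain n m N H = - (Ki * P)"
    unfolding Lgain_def using inv by (simp add: K_def Ki_def P_def)
  define u where "u = Lgain n m N H *\<^sub>v y"
  have uc: "u \<in> carrier_vec m" unfolding u_def L using Kic Pc yc by simp
  have hu: "K *\<^sub>v u = - (P *\<^sub>v y)"
  proof -
    have "K *\<^sub>v u = (K * (- (Ki * P))) *\<^sub>v y"
      unfolding u_def L by (rule assoc_mult_mat_vec[symmetric], insert Kc Kic Pc yc, auto)
    also have "K * (- (Ki * P)) = - P"
      using Kc Kic Pc KKi by (simp add: assoc_mult_mat[of _ m m _ m _ "n+N*n", symmetric])
    also have "(- P) *\<^sub>v y = - (P *\<^sub>v y)" by (rule uminus_mat_vec[OF Pc yc])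
    finally show ?thesis .
  qed
  have c0: "concat_vecs (map r [0..<N+1]) = r 0 @\<^sub>v rs"
  proof -
    have "[0..<N+1] = 0 # [1..<N+1]" using upt_conv_Cons[of 0 "N+1"] by simp
    then show ?thesis unfolding rs_def concat_vecs_def by simp
  qed
  have r0: "r 0 \<in> carrier_vec n" using r by simp
  have main: "(x @\<^sub>v u @\<^sub>v r 0 @\<^sub>v rs) \<bullet> (H *\<^sub>v (x @\<^sub>v u @\<^sub>v r 0 @\<^sub>v rs))
       < (x @\<^sub>v v @\<^sub>v r 0 @\<^sub>v rs) \<bullet> (H *\<^sub>v (x @\<^sub>v v @\<^sub>v r 0 @\<^sub>v rs))"
    if v: "v \<in> carrier_vec m" "v \<noteq> u" for v
    by (rule quad_min[of H n m N x "r 0" rs u v], insert props Kpd x r0 rsc uc hu v,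
        auto simp: K_def P_def y_def)
  show ?thesis
    unfolding Let_def H_def[symmetric] rs_def[symmetric] y_def[symmetric] u_def[symmetric] c0
    using uc main by auto
qed

end
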